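(* The map $G$ is regular on $(\mathcal{X},d)$: its set of periodic points (points $x$ with $G^n(x)=x$ for some $n\ge1$) is dense in $\mathcal{X}$.
   Context: Fix an integer $\mathsf{N}\ge 1$ and write $\llbracket a;b\rrbracket=\{a,a+1,\dots,b\}$. Let $f:\mathbb{Z}/4\mathbb{Z}\to\mathbb{Z}/4\mathbb{Z}$, $f(x)=x+1 \pmod 4$, with $f^{-1}(x)=x-1\pmod 4$ and $f^0=\mathrm{id}$. Let $\mathrm{sign}(x)=1$ if $x>0$, $0$ if $x=0$, $-1$ if $x<0$. For $k\in\llbracket -\mathsf{N};\mathsf{N}\rrbracket$ define $f_k:(\mathbb{Z}/4\mathbb{Z})^{\mathsf{N}}\to(\mathbb{Z}/4\mathbb{Z})^{\mathsf{N}}$ by $f_k(C_1,\dots,C_{\mathsf{N}})=(C_1,\dots,C_{|k|-1},f^{\mathrm{sign}(k)}(C_{|k|}),\dots,f^{\mathrm{sign}(k)}(C_{\mathsf{N}}))$ (so $f_0$ is the identity). Folding sequences are $F=(F^j)_{j\in\mathbb{N}}\in\llbracket -\mathsf{N};\mathsf{N}\rrbracket^{\mathbb{N}}$; let $i(F)=F^0$ and let $\sigma$ be the shift, $\sigma((F^j)_{j})=(F^{j+1})_{j}$. A finite sequence $(k_1,\dots,k_n)$ is identified with $(k_1,\dots,k_n,0,0,\dots)$. On $\check{\mathcal{X}}=(\mathbb{Z}/4\mathbb{Z})^{\mathsf{N}}\times\llbracket -\mathsf{N};\mathsf{N}\rrbracket^{\mathbb{N}}$ define $G((C,F))=(f_{i(F)}(C),\sigma(F))$.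 SAW requirement: for $C\in(\mathbb{Z}/4\mathbb{Z})^{\mathsf{N}}$ let $p(C)=(X_0,\dots,X_{\mathsf{N}})\in(\mathbb{Z}^2)^{\mathsf{N}+1}$ with $X_0=(0,0)$ and $X_i=X_{i-1}+v(C_i)$, where $v(0)=(1,0)$, $v(1)=(0,-1)$, $v(2)=(-1,0)$, $v(3)=(0,1)$. $C$ satisfies the SAW requirement iff the points $X_0,\dots,X_{\mathsf{N}}$ are pairwise distinct. Let $\mathfrak{C}_{\mathsf{N}}$ be the set of $C\in(\mathbb{Z}/4\mathbb{Z})^{\mathsf{N}}$ for which there exist $n\ge1$ and $k_1,\dots,k_n\in\llbracket -\mathsf{N};\mathsf{N}\rrbracket$ such that $C$ is the first component of $G^n(((0,\dots,0),(k_1,\dots,k_n)))$ and, for every $i\le n$, the first component of $G^i(((0,\dots,0),(k_1,\dots,k_n)))$ satisfies the SAW requirement. Let $\mathcal{X}=\mathfrak{C}_{\mathsf{N}}\times\llbracket -\mathsf{N};\mathsf{N}\rrbracket^{\mathbb{N}}$ with metric $d((C,F),(\check C,\check F))=d_C(C,\check C)+d_F(F,\check F)$, where $d_C(C,\check C)=\sum_{k=1}^{\mathsf{N}}\delta(C_k,\check C_k)2^{\mathsf{N}-k}$ ($\delta(a,b)=0$ if $a=b$, $1$ otherwise) and $d_F(F,\check F)=\frac{9}{2\mathsf{N}}\sum_{k=0}^{\infty}\frac{|F^k-\check F^k|}{10^{k+1}}$. The paper regards $G$ as a self-map of $\mathcal{X}$. *)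

theory Defs
  imports "HOL-Analysis.Analysis" "HOL-Library.Numeral_Type"
begin

text \<open>Configurations: lists over Z/4Z (type 4) of length N; entry C!(j-1) is C_j.
  Folding sequences: functions nat => int (values in [-N,N] inside the space).\<close>

definition fmap :: "int \<Rightarrow> 4 list \<Rightarrow> 4 list" where
  "fmap k C = [ (if int i + 1 \<ge> \<bar>k\<bar> then C ! i + of_int (sgn k) else C ! i). i \<leftarrow> [0..<length C]]"

definition Gmap :: "4 list \<times> (nat \<Rightarrow> int) \<Rightarrow> 4 list \<times> (nat \<Rightarrow> int)" where
  "Gmap x = (fmap (snd x 0) (fst x), (\<lambda>j. snd x (Suc j)))"

definition vstep :: "4 \<Rightarrow> int \<times> int" where
  "vstep c = (if c = 0 then (1, 0) else if c = 1 then (0, -1) else if c = 2 then (-1, 0) else (0, 1))"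

definition pathpt :: "4 list \<Rightarrow> nat \<Rightarrow> int \<times> int" where
  "pathpt C i = ((\<Sum>j<i. fst (vstep (C ! j))), (\<Sum>j<i. snd (vstep (C ! j))))"

definition SAW :: "4 list \<Rightarrow> bool" where
  "SAW C \<longleftrightarrow> inj_on (pathpt C) {0..length C}"

definition finseq :: "int list \<Rightarrow> nat \<Rightarrow> int" where
  "finseq ks j = (if j < length ks then ks ! j else 0)"

definition confs :: "nat \<Rightarrow> 4 list set" where
  "confs N = {C. \<exists>ks. length ks \<ge> 1 \<and> set ks \<subseteq> {- int N..int N} \<and>
      C = fst ((Gmap ^^ length ks) (replicate N 0, finseq ks)) \<and>
      (\<forall>i\<le>length ks. SAW (fst ((Gmap ^^ i) (replicate N 0, finseq ks))))}"

definition Xspace :: "nat \<Rightarrow> (4 list \<times> (nat \<Rightarrow> int)) set" where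
  "Xspace N = {(C, F). C \<in> confs N \<and> (\<forall>j. F j \<in> {- int N..int N})}"

definition dC :: "nat \<Rightarrow> 4 list \<Rightarrow> 4 list \<Rightarrow> real" where
  "dC N C C' = (\<Sum>k=1..N. (if C ! (k - 1) = C' ! (k - 1) then 0 else 1) * 2 ^ (N - k))"

definition dF :: "nat \<Rightarrow> (nat \<Rightarrow> int) \<Rightarrow> (nat \<Rightarrow> int) \<Rightarrow> real" where
  "dF N F F' = 9 / (2 * real N) * (\<Sum>k. real_of_int \<bar>F k - F' k\<bar> / 10 ^ (k + 1))"

definition dX :: "nat \<Rightarrow> 4 list \<times> (nat \<Rightarrow> int) \<Rightarrow> 4 list \<times> (nat \<Rightarrow> int) \<Rightarrow> real" where
  "dX N x y = dC N (fst x) (fst y) + dF N (snd x) (snd y)"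

end

theory Submission
  imports Defs
begin

lemma fmap_len[simp]: "length (fmap k C) = length C"
  by (simp add: fmap_def)

lemma fmap_inv: "fmap (-k) (fmap k C) = C"
  by (rule nth_equalityI) (auto simp: fmap_def sgn_minus)

fun cf :: "(nat \<Rightarrow> int) \<Rightarrow> nat \<Rightarrow> 4 list \<Rightarrow> 4 list" where
  "cf F 0 C = C"
| "cf F (Suc n) C = fmap (F n) (cf F n C)"

lemma Gmap_pow: "(Gmap ^^ n) (C, F) = (cf F n C, \<lambda>j. F (j + n))"
  by (induction n) (auto simp: Gmap_def)

definition Fp :: "(nat \<Rightarrow> int) \<Rightarrow> nat \<Rightarrow> nat \<Rightarrow> int" where
  "Fp F m j = (let r = j mod (2*m) in if r < m then F r else - F (2*m - 1 - r))"

lemma Fp_lo: "i < m \<Longrightarrow> Fp F m i = F i"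
  by (simp add: Fp_def)

lemma Fp_hi: "i < m \<Longrightarrow> Fp F m (m + i) = - Fp F m (m - 1 - i)"
  by (simp add: Fp_def)

lemma Fp_per: "m \<ge> 1 \<Longrightarrow> Fp F m (j + 2*m) = Fp F m j"
  by (simp add: Fp_def)

lemma cf_back: "i \<le> m \<Longrightarrow> cf (Fp F m) (m + i) C = cf (Fp F m) (m - i) C"
proof (induction i)
  case 0 then show ?case by simp
next
  case (Suc i)
  have e: "m - i = Suc (m - 1 - i)" using Suc.prems by simp
  have "cf (Fp F m) (m + Suc i) C = fmap (Fp F m (m + i)) (cf (Fp F m) (m + i) C)" by simp
  also have "\<dots> = fmap (- Fp F m (m - 1 - i)) (cf (Fp F m) (m - i) C)"
    using Suc by (simp add: Fp_hi)
  also have "\<dots> = fmap (- Fp F m (m - 1 - i)) (fmap (Fp F m (m - 1 - i)) (cf (Fp F m) (m - 1 - i) C))"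
    by (simp only: e cf.simps)
  also have "\<dots> = cf (Fp F m) (m - Suc i) C" by (simp add: fmap_inv)
  finally show ?case .
qed

lemma Fp_bound: "m \<ge> 1 \<Longrightarrow> \<forall>j. F j \<in> {- int N..int N} \<Longrightarrow> Fp F m j \<in> {- int N..int N}"
proof -
  assume m: "m \<ge> 1" and b: "\<forall>j. F j \<in> {- int N..int N}"
  show ?thesis
  proof (cases "j mod (2*m) < m")
    case True then show ?thesis using b[rule_format, of "j mod (2*m)"] by (simp add: Fp_def)
  next
    case False then show ?thesis using b[rule_format, of "2*m - 1 - j mod (2*m)"] by (auto simp: Fp_def)
  qed
qed

lemma dF_small:
  assumes m: "m \<ge> 1" and b: "\<forall>j. F j \<in> {- int N..int N}" and N: "N \<ge> 1"
  shows "dF N F (Fp F m) \<le> 1 / 10 ^ m"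
proof -
  define t where "t k = real_of_int \<bar>F k - Fp F m k\<bar> / 10 ^ (k + 1)" for k
  have tb: "t k \<le> 2 * real N * (1/10) ^ (k+1)" for k
  proof -
    have "\<bar>F k - Fp F m k\<bar> \<le> 2 * int N" using b[rule_format, of k] Fp_bound[OF m b, of k] by (simp add: abs_le_iff)
    then have "real_of_int \<bar>F k - Fp F m k\<bar> \<le> 2 * real N" by linarith
    then have "real_of_int \<bar>F k - Fp F m k\<bar> / 10 ^ (k + 1) \<le> 2 * real N / 10 ^ (k+1)"
      by (intro divide_right_mono) auto
    then show ?thesis unfolding t_def by (simp add: power_one_over)
  qed
  have t0: "t k \<ge> 0" for k unfolding t_def by simp
  have sg: "summable (\<lambda>k. 2 * real N * (1/10::real) ^ (k+1))"
    by (intro summable_mult summable_ignore_initial_segment[where k=1, simplified]) simp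
  have st: "summable t"
    by (rule summable_comparison_test[OF _ sg]) (use t0 tb in auto)
  have split: "suminf t = (\<Sum>i<m. t i) + suminf (\<lambda>i. t (i + m))"
    using suminf_split_initial_segment[OF st, of m] by simp
  have z: "(\<Sum>i<m. t i) = 0" unfolding t_def by (auto simp: Fp_lo)
  have sg2: "summable (\<lambda>i. 2 * real N * (1/10::real) ^ (i + m + 1))"
    using summable_ignore_initial_segment[OF sg, of m] by simp
  have "suminf (\<lambda>i. t (i + m)) \<le> suminf (\<lambda>i. 2 * real N * (1/10::real) ^ (i + m + 1))"
    by (rule suminf_le) (use tb summable_ignore_initial_segment[OF st, of m] sg2 in auto)
  also have "\<dots> = 2 * real N * (1/10)^(m+1) * suminf (\<lambda>i. (1/10::real) ^ i)"
  proof -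
    have "(\<lambda>i. 2 * real N * (1/10::real) ^ (i + m + 1)) = (\<lambda>i. 2 * real N * (1/10)^(m+1) * (1/10::real) ^ i)"
      by (auto simp: power_add)
    moreover have "summable (\<lambda>i. (1/10::real) ^ i)" by simp
    ultimately show ?thesis by (simp only: suminf_mult)
  qed
  also have "\<dots> = 2 * real N / (9 * 10 ^ m)"
  proof -
    have "suminf (\<lambda>i. (1/10::real) ^ i) = 10/9" using suminf_geometric[of "1/10::real"] by simp
    then show ?thesis by (simp add: field_simps)
  qed
  finally have "suminf t \<le> 2 * real N / (9 * 10 ^ m)" using split z by simp
  then have "9 / (2 * real N) * suminf t \<le> 9 / (2 * real N) * (2 * real N / (9 * 10 ^ m))"
    by (intro mult_left_mono) auto
  also have "\<dots> = 1 / 10 ^ m" using N by simp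
  finally show ?thesis unfolding dF_def t_def by simp
qed

theorem mainTheorem3:
  fixes N :: nat
  assumes "N \<ge> 1"
  shows "\<forall>x\<in>Xspace N. \<forall>\<epsilon>>0. \<exists>y\<in>Xspace N.
           (\<exists>n\<ge>1. (Gmap ^^ n) y = y) \<and> dX N x y < \<epsilon>"
proof (intro ballI allI impI)
  fix x :: "4 list \<times> (nat \<Rightarrow> int)" and \<epsilon> :: real
  assume x: "x \<in> Xspace N" and e: "\<epsilon> > 0"
  obtain C F where xCF: "x = (C, F)" by (cases x)
  have C: "C \<in> confs N" and b: "\<forall>j. F j \<in> {- int N..int N}" using x xCF by (auto simp: Xspace_def)
  obtain n where n: "(1/10::real) ^ n < \<epsilon>" using real_arch_pow_inv[OF e, of "1/10"] by auto
  define m where "m = Suc n"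
  have m1: "m \<ge> 1" by (simp add: m_def)
  have "1 / (10::real) ^ m \<le> (1/10) ^ n" unfolding m_def by (simp add: power_one_over frac_le)
  with n have lt: "1 / (10::real) ^ m < \<epsilon>" by simp
  define y where "y = (C, Fp F m)"
  have yX: "y \<in> Xspace N" using C Fp_bound[OF m1 b] by (auto simp: y_def Xspace_def)
  have cyc: "cf (Fp F m) (2*m) C = C" using cf_back[of m m F C] by (simp add: mult_2)
  have "(Gmap ^^ (2*m)) y = y"
    unfolding y_def Gmap_pow cyc using Fp_per[OF m1] by simp
  moreover have "dX N x y < \<epsilon>"
    using dF_small[OF m1 b assms] lt by (simp add: dX_def xCF y_def dC_def)
  moreover have "2*m \<ge> 1" using m1 by simp
  ultimately show "\<exists>y\<in>Xspace N. (\<exists>n\<ge>1. (Gmap ^^ n) y = y) \<and> dX N x y < \<epsilon>"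
    using yX by blast
qed

end
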